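(* Let $k$ be a field, $n$ a positive integer, and $\mathcal B\subseteq\{1,\ldots,n\}\times\{1,\ldots,n\}$ such that $(i,i)\in\mathcal B$ for all $i$ and $(i,l)\in\mathcal B$ whenever $(i,j)\in\mathcal B$ and $(j,l)\in\mathcal B$. Then the structural matrix algebra $\mathcal M(\mathcal B,k)$ is a Frobenius algebra if and only if $\mathcal B=(I_1\times I_1)\cup\cdots\cup(I_r\times I_r)$ for some partition $I_1,\ldots,I_r$ of $\{1,\ldots,n\}$. In this case $\mathcal M(\mathcal B,k)\simeq M_{n_1}(k)\times\cdots\times M_{n_r}(k)$, where $n_j=|I_j|$.
   Context: Let $e_{i,j}$ denote the matrix units of $M_n(k)$. The structural matrix algebra associated to $\mathcal B$ is the subalgebra $\mathcal M(\mathcal B,k)=\sum_{(i,j)\in\mathcal B}k e_{i,j}$ of $M_n(k)$, i.e. the matrices whose $(i,j)$-entries vanish for $(i,j)\notin\mathcal B$. A finite dimensional $k$-algebra $A$ is Frobenius if $A\cong A^*$ as left (equivalently right) $A$-modules. *)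

theory Defs
  imports Main
begin

definition dual_space :: "'a set \<Rightarrow> ('a \<Rightarrow> 'a \<Rightarrow> 'a) \<Rightarrow> ('k::field \<Rightarrow> 'a \<Rightarrow> 'a) \<Rightarrow> ('a \<Rightarrow> 'k) set" where
  "dual_space A add sm =
     {f. (\<forall>x\<in>A. \<forall>y\<in>A. f (add x y) = f x + f y)
       \<and> (\<forall>c. \<forall>x\<in>A. f (sm c x) = c * f x)
       \<and> (\<forall>x. x \<notin> A \<longrightarrow> f x = 0)}"

definition dual_lact :: "'a set \<Rightarrow> ('a \<Rightarrow> 'a \<Rightarrow> 'a) \<Rightarrow> 'a \<Rightarrow> ('a \<Rightarrow> 'k::field) \<Rightarrow> ('a \<Rightarrow> 'k)" where
  "dual_lact A mul a f = (\<lambda>x. if x \<in> A then f (mul x a) else 0)"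

definition is_frobenius :: "'a set \<Rightarrow> ('a \<Rightarrow> 'a \<Rightarrow> 'a) \<Rightarrow> ('k::field \<Rightarrow> 'a \<Rightarrow> 'a) \<Rightarrow> ('a \<Rightarrow> 'a \<Rightarrow> 'a) \<Rightarrow> bool" where
  "is_frobenius A add sm mul \<longleftrightarrow>
     (\<exists>\<phi> :: 'a \<Rightarrow> ('a \<Rightarrow> 'k).
        bij_betw \<phi> A (dual_space A add sm)
      \<and> (\<forall>x\<in>A. \<forall>y\<in>A. \<phi> (add x y) = (\<lambda>z. \<phi> x z + \<phi> y z))
      \<and> (\<forall>c. \<forall>x\<in>A. \<phi> (sm c x) = (\<lambda>z. c * \<phi> x z))
      \<and> (\<forall>a\<in>A. \<forall>b\<in>A. \<phi> (mul a b) = dual_lact A mul a (\<phi> b)))"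

definition alg_iso :: "'a set \<Rightarrow> ('a \<Rightarrow> 'a \<Rightarrow> 'a) \<Rightarrow> ('k::field \<Rightarrow> 'a \<Rightarrow> 'a) \<Rightarrow> ('a \<Rightarrow> 'a \<Rightarrow> 'a) \<Rightarrow> 'a
    \<Rightarrow> 'b set \<Rightarrow> ('b \<Rightarrow> 'b \<Rightarrow> 'b) \<Rightarrow> ('k \<Rightarrow> 'b \<Rightarrow> 'b) \<Rightarrow> ('b \<Rightarrow> 'b \<Rightarrow> 'b) \<Rightarrow> 'b \<Rightarrow> bool" where
  "alg_iso A add sm mul one A' add' sm' mul' one' \<longleftrightarrow>
     (\<exists>\<psi>. bij_betw \<psi> A A'
        \<and> (\<forall>x\<in>A. \<forall>y\<in>A. \<psi> (add x y) = add' (\<psi> x) (\<psi> y))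
        \<and> (\<forall>c. \<forall>x\<in>A. \<psi> (sm c x) = sm' c (\<psi> x))
        \<and> (\<forall>x\<in>A. \<forall>y\<in>A. \<psi> (mul x y) = mul' (\<psi> x) (\<psi> y))
        \<and> \<psi> one = one')"

type_synonym 'k mat = "nat \<Rightarrow> nat \<Rightarrow> 'k"

definition madd :: "'k::field mat \<Rightarrow> 'k mat \<Rightarrow> 'k mat" where
  "madd M N = (\<lambda>i j. M i j + N i j)"

definition msmult :: "'k::field \<Rightarrow> 'k mat \<Rightarrow> 'k mat" where
  "msmult c M = (\<lambda>i j. c * M i j)"

definition mmult :: "nat \<Rightarrow> 'k::field mat \<Rightarrow> 'k mat \<Rightarrow> 'k mat" where
  "mmult n M N = (\<lambda>i j. \<Sum>l\<in>{1..n}. M i l * N l j)"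

definition mone :: "nat \<Rightarrow> 'k::field mat" where
  "mone n = (\<lambda>i j. if i = j \<and> i \<in> {1..n} then 1 else 0)"

text \<open>M(B,k): n x n matrices (indices 1..n) whose (i,j)-entries vanish for (i,j) not in B
 (entries outside the index range are 0, as B is a subset of {1..n} x {1..n}).\<close>
definition SMA :: "(nat \<times> nat) set \<Rightarrow> 'k::field mat set" where
  "SMA B = {M. \<forall>i j. (i, j) \<notin> B \<longrightarrow> M i j = 0}"

abbreviation full_mat :: "nat \<Rightarrow> 'k::field mat set" where
  "full_mat m \<equiv> SMA ({1..m} \<times> {1..m})"

definition prod_mat :: "nat list \<Rightarrow> (nat \<Rightarrow> 'k::field mat) set" where
  "prod_mat ns = {F. (\<forall>j. j \<ge> length ns \<longrightarrow> F j = (\<lambda>_ _. 0))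
                   \<and> (\<forall>j < length ns. F j \<in> full_mat (ns ! j))}"

definition padd :: "(nat \<Rightarrow> 'k::field mat) \<Rightarrow> (nat \<Rightarrow> 'k mat) \<Rightarrow> (nat \<Rightarrow> 'k mat)" where
  "padd F G = (\<lambda>j. madd (F j) (G j))"

definition psmult :: "'k::field \<Rightarrow> (nat \<Rightarrow> 'k mat) \<Rightarrow> (nat \<Rightarrow> 'k mat)" where
  "psmult c F = (\<lambda>j. msmult c (F j))"

definition pmult :: "nat list \<Rightarrow> (nat \<Rightarrow> 'k::field mat) \<Rightarrow> (nat \<Rightarrow> 'k mat) \<Rightarrow> (nat \<Rightarrow> 'k mat)" where
  "pmult ns F G = (\<lambda>j. if j < length ns then mmult (ns ! j) (F j) (G j) else (\<lambda>_ _. 0))"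

definition pone :: "nat list \<Rightarrow> (nat \<Rightarrow> 'k::field mat)" where
  "pone ns = (\<lambda>j. if j < length ns then mone (ns ! j) else (\<lambda>_ _. 0))"

definition is_partition_list :: "nat set list \<Rightarrow> nat \<Rightarrow> bool" where
  "is_partition_list Is n \<longleftrightarrow>
     (\<forall>j < length Is. Is ! j \<noteq> {})
   \<and> (\<forall>j < length Is. \<forall>l < length Is. j \<noteq> l \<longrightarrow> Is ! j \<inter> Is ! l = {})
   \<and> \<Union> (set Is) = {1..n}"

definition block_union :: "nat set list \<Rightarrow> (nat \<times> nat) set" where
  "block_union Is = (\<Union>I\<in>set Is. I \<times> I)"

end

theory Submission
  imports Defs
begin


definition E :: "nat \<Rightarrow> nat \<Rightarrow> 'k::field mat" where
  "E p q = (\<lambda>a b. if a = p \<and> b = q then 1 else 0)"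

lemma E_in: "(p,q) \<in> B \<Longrightarrow> E p q \<in> SMA B"
  by (auto simp: E_def SMA_def)

lemma zero_in: "(\<lambda>_ _. 0) \<in> SMA B"
  by (auto simp: SMA_def)

lemma madd_in: "x \<in> SMA B \<Longrightarrow> y \<in> SMA B \<Longrightarrow> madd x y \<in> SMA B"
  by (auto simp: SMA_def madd_def)

lemma msmult_in: "x \<in> SMA B \<Longrightarrow> msmult c x \<in> SMA B"
  by (auto simp: SMA_def msmult_def)

lemma mmult_in:
  assumes "\<forall>i j l. (i, j) \<in> B \<and> (j, l) \<in> B \<longrightarrow> (i, l) \<in> B"
    and "x \<in> SMA B" "y \<in> SMA B"
  shows "mmult n x y \<in> SMA B"
  unfolding SMA_def mem_Collect_eq
proof (intro allI impI)
  fix i j assume ij: "(i,j) \<notin> B"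
  have "x i l * y l j = 0" for l
  proof (cases "(i,l) \<in> B \<and> (l,j) \<in> B")
    case True with ij assms(1) show ?thesis by blast
  next
    case False with assms(2,3) show ?thesis by (auto simp: SMA_def)
  qed
  then show "mmult n x y i j = 0" unfolding mmult_def by (intro sum.neutral) auto
qed

lemma E_mult_left:
  assumes "j \<in> {1..n}"
  shows "mmult n (E i j) m = (\<lambda>p v. if p = i then m j v else 0)"
proof -
  have "(\<Sum>l\<in>{1..n}. E i j p l * m l v) = (if p = i then m j v else 0)" for p v
  proof -
    have "(\<Sum>l\<in>{1..n}. E i j p l * m l v) = (\<Sum>l\<in>{1..n}. (if l = j then (if p = i then m l v else 0) else 0))"
      by (intro sum.cong) (auto simp: E_def)
    also have "\<dots> = (if p = i then m j v else 0)" using assms by (simp add: sum.delta')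
    finally show ?thesis .
  qed
  then show ?thesis by (simp add: mmult_def)
qed

lemma E_mult_right:
  assumes "i \<in> {1..n}"
  shows "mmult n x (E i j) = (\<lambda>p q. if q = j then x p i else 0)"
proof -
  have "(\<Sum>l\<in>{1..n}. x p l * E i j l q) = (if q = j then x p i else 0)" for p q
  proof -
    have "(\<Sum>l\<in>{1..n}. x p l * E i j l q) = (\<Sum>l\<in>{1..n}. (if l = i then (if q = j then x p l else 0) else 0))"
      by (intro sum.cong) (auto simp: E_def)
    also have "\<dots> = (if q = j then x p i else 0)" using assms by (simp add: sum.delta')
    finally show ?thesis .
  qed
  then show ?thesis by (simp add: mmult_def)
qed

lemma frob_sym:
  fixes B :: "(nat \<times> nat) set" and n :: nat
  assumes sub: "B \<subseteq> {1..n} \<times> {1..n}"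
    and refl: "\<forall>i\<in>{1..n}. (i, i) \<in> B"
    and trans: "\<forall>i j l. (i, j) \<in> B \<and> (j, l) \<in> B \<longrightarrow> (i, l) \<in> B"
    and fr: "is_frobenius (SMA B :: 'k::field mat set) madd msmult (mmult n)"
    and ij: "(i,j) \<in> B"
  shows "(j,i) \<in> B"
proof (rule ccontr)
  assume ji: "(j,i) \<notin> B"
  let ?A = "SMA B :: 'k mat set"
  obtain \<phi> :: "'k mat \<Rightarrow> ('k mat \<Rightarrow> 'k)" where bij: "bij_betw \<phi> ?A (dual_space ?A madd msmult)"
    and hom: "\<forall>c. \<forall>x\<in>?A. \<phi> (msmult c x) = (\<lambda>z. c * \<phi> x z)"
    and md: "\<forall>a\<in>?A. \<forall>b\<in>?A. \<phi> (mmult n a b) = dual_lact ?A (mmult n) a (\<phi> b)"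
    using fr unfolding is_frobenius_def by blast
  have iin: "i \<in> {1..n}" and jin: "j \<in> {1..n}" using ij sub by auto
  define Z :: "'k mat" where "Z = (\<lambda>_ _. 0)"
  have Zin: "Z \<in> ?A" by (simp add: Z_def zero_in)
  have "msmult 0 Z = Z" by (simp add: msmult_def Z_def)
  then have phiZ: "\<phi> Z = (\<lambda>_. 0)" using hom Zin by (metis mult_zero_left)
  define f :: "'k mat \<Rightarrow> 'k" where "f = (\<lambda>x. if x \<in> ?A then x j j else 0)"
  have "f \<in> dual_space ?A madd msmult"
    by (auto simp: dual_space_def f_def madd_in msmult_in) (auto simp: madd_def msmult_def)
  then obtain m where min: "m \<in> ?A" and fm: "\<phi> m = f"
    using bij by (metis bij_betw_iff_bijections)
  have Eij: "E i j \<in> ?A" using ij by (rule E_in)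
  have Ejj: "E j j \<in> ?A" using refl jin by (intro E_in) auto
  have Eijm: "mmult n (E i j) m \<in> ?A" using trans Eij min by (rule mmult_in)
  have "\<phi> (mmult n (E i j) m) = dual_lact ?A (mmult n) (E i j) f"
    using md Eij min fm by simp
  also have "\<dots> = (\<lambda>_. 0)"
  proof
    fix x
    show "dual_lact ?A (mmult n) (E i j) f x = 0"
    proof (cases "x \<in> ?A")
      case True
      then have "mmult n x (E i j) \<in> ?A" using trans Eij by (intro mmult_in)
      moreover have "x j i = 0" using True ji by (simp add: SMA_def)
      ultimately show ?thesis using True by (simp add: dual_lact_def f_def E_mult_right[OF iin])
    qed (simp add: dual_lact_def)
  qed
  finally have "\<phi> (mmult n (E i j) m) = \<phi> Z" using phiZ by simp
  then have "mmult n (E i j) m = Z"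
    using bij Eijm Zin by (metis bij_betw_iff_bijections)
  then have row0: "m j v = 0" for v
    unfolding E_mult_left[OF jin] Z_def by (metis (full_types))
  have Ejjm: "mmult n (E j j) m = Z"
    unfolding E_mult_left[OF jin] Z_def using row0 by (auto simp: fun_eq_iff)
  have "\<phi> (mmult n (E j j) m) = dual_lact ?A (mmult n) (E j j) f"
    using md Ejj min fm by simp
  also have "\<dots> = f"
  proof
    fix x
    show "dual_lact ?A (mmult n) (E j j) f x = f x"
    proof (cases "x \<in> ?A")
      case True
      then have "mmult n x (E j j) \<in> ?A" using trans Ejj by (intro mmult_in)
      then show ?thesis using True by (simp add: dual_lact_def f_def E_mult_right[OF jin])
    qed (simp add: dual_lact_def f_def)
  qed
  finally have "f = (\<lambda>_. 0)" using Ejjm phiZ by simp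
  then have "f (E j j) = 0" by simp
  moreover have "f (E j j) = 1" using Ejj by (simp add: f_def E_def)
  ultimately show False by simp
qed

definition tr :: "nat \<Rightarrow> 'k::field mat \<Rightarrow> 'k mat \<Rightarrow> 'k" where
  "tr n x b = (\<Sum>p\<in>{1..n}. \<Sum>q\<in>{1..n}. x p q * b q p)"

lemma tr_assoc: "tr n x (mmult n a b) = tr n (mmult n x a) b"
proof -
  have "tr n x (mmult n a b) = (\<Sum>p\<in>{1..n}. \<Sum>q\<in>{1..n}. \<Sum>l\<in>{1..n}. x p q * a q l * b l p)"
    by (simp add: tr_def mmult_def sum_distrib_left mult.assoc)
  also have "\<dots> = (\<Sum>p\<in>{1..n}. \<Sum>l\<in>{1..n}. \<Sum>q\<in>{1..n}. x p q * a q l * b l p)"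
    by (intro sum.cong refl sum.swap)
  also have "\<dots> = tr n (mmult n x a) b"
    by (simp add: tr_def mmult_def sum_distrib_right)
  finally show ?thesis .
qed

lemma tr_add1: "tr n (madd x y) b = tr n x b + tr n y b"
  by (simp add: tr_def madd_def distrib_right sum.distrib)

lemma tr_smul1: "tr n (msmult c x) b = c * tr n x b"
  by (simp add: tr_def msmult_def sum_distrib_left mult.assoc)

lemma f_sum:
  assumes f: "f \<in> dual_space A madd msmult"
    and Z: "(\<lambda>_ _. 0) \<in> A"
    and cl: "\<And>x y. x \<in> A \<Longrightarrow> y \<in> A \<Longrightarrow> madd x y \<in> A"
  shows "finite S \<Longrightarrow> (\<forall>s\<in>S. g s \<in> A) \<Longrightarrow> (\<lambda>i j. \<Sum>s\<in>S. g s i j :: 'k::field) \<in> A \<and> f (\<lambda>i j. \<Sum>s\<in>S. g s i j) = (\<Sum>s\<in>S. f (g s))"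
proof (induction S rule: finite_induct)
  case empty
  have "f (msmult 0 (\<lambda>_ _. 0)) = 0 * f (\<lambda>_ _. 0)" using f Z by (simp add: dual_space_def)
  moreover have "msmult 0 (\<lambda>_ _. 0::'k) = (\<lambda>_ _. 0)" by (simp add: msmult_def)
  ultimately show ?case using Z by simp
next
  case (insert s S)
  have eq: "(\<lambda>i j. \<Sum>s\<in>insert s S. g s i j) = madd (g s) (\<lambda>i j. \<Sum>s\<in>S. g s i j)"
    using insert by (simp add: madd_def)
  have gs: "g s \<in> A" using insert by simp
  with insert have "(\<lambda>i j. \<Sum>s\<in>S. g s i j) \<in> A \<and> f (\<lambda>i j. \<Sum>s\<in>S. g s i j) = (\<Sum>s\<in>S. f (g s))" by simp
  then show ?case unfolding eq using gs cl f insert by (simp add: dual_space_def)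
qed

lemma sym_frob:
  fixes B :: "(nat \<times> nat) set" and n :: nat
  assumes sub: "B \<subseteq> {1..n} \<times> {1..n}"
    and trans: "\<forall>i j l. (i, j) \<in> B \<and> (j, l) \<in> B \<longrightarrow> (i, l) \<in> B"
    and sym: "\<And>i j. (i,j) \<in> B \<Longrightarrow> (j,i) \<in> B"
  shows "is_frobenius (SMA B :: 'k::field mat set) madd msmult (mmult n)"
proof -
  let ?A = "SMA B :: 'k mat set"
  define \<phi> :: "'k mat \<Rightarrow> ('k mat \<Rightarrow> 'k)" where "\<phi> b = (\<lambda>x. if x \<in> ?A then tr n x b else 0)" for b
  have finB: "finite B" using sub by (rule finite_subset) auto
  have trE: "tr n (E q p) b = b p q" if "p \<in> {1..n}" "q \<in> {1..n}" for p q b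
  proof -
    have inner: "(\<Sum>q'\<in>{1..n}. E q p p' q' * b q' p') = (if p' = q then b p p' else 0)" for p'
    proof -
      have "(\<Sum>q'\<in>{1..n}. E q p p' q' * b q' p') = (\<Sum>q'\<in>{1..n}. if q' = p then (if p' = q then b q' p' else 0) else 0)"
        by (intro sum.cong refl) (auto simp: E_def)
      also have "\<dots> = (if p' = q then b p p' else 0)" using that by (simp add: sum.delta')
      finally show ?thesis .
    qed
    have "tr n (E q p) b = (\<Sum>p'\<in>{1..n}. if p' = q then b p p' else 0)"
      unfolding tr_def inner ..
    also have "\<dots> = b p q" using that by (simp add: sum.delta)
    finally show ?thesis .
  qed
  have add: "\<forall>x\<in>?A. \<forall>y\<in>?A. \<phi> (madd x y) = (\<lambda>z. \<phi> x z + \<phi> y z)"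
    by (auto simp: \<phi>_def tr_def madd_def distrib_left sum.distrib fun_eq_iff)
  have smul: "\<forall>c. \<forall>x\<in>?A. \<phi> (msmult c x) = (\<lambda>z. c * \<phi> x z)"
    by (auto simp: \<phi>_def tr_def msmult_def sum_distrib_left fun_eq_iff ac_simps)
  have mod: "\<forall>a\<in>?A. \<forall>b\<in>?A. \<phi> (mmult n a b) = dual_lact ?A (mmult n) a (\<phi> b)"
  proof (intro ballI)
    fix a b assume a: "a \<in> ?A" and b: "b \<in> ?A"
    show "\<phi> (mmult n a b) = dual_lact ?A (mmult n) a (\<phi> b)"
    proof
      fix x
      show "\<phi> (mmult n a b) x = dual_lact ?A (mmult n) a (\<phi> b) x"
      proof (cases "x \<in> ?A")
        case True
        then have "mmult n x a \<in> ?A" using trans a by (intro mmult_in)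
        then show ?thesis using True by (simp add: \<phi>_def dual_lact_def tr_assoc)
      qed (simp add: \<phi>_def dual_lact_def)
    qed
  qed
  have into: "\<phi> b \<in> dual_space ?A madd msmult" for b
    by (auto simp: dual_space_def \<phi>_def madd_in msmult_in tr_add1 tr_smul1)
  have inj: "inj_on \<phi> ?A"
  proof
    fix b b' assume b: "b \<in> ?A" and b': "b' \<in> ?A" and eq: "\<phi> b = \<phi> b'"
    show "b = b'"
    proof (intro ext)
      fix p q
      show "b p q = b' p q"
      proof (cases "(p,q) \<in> B")
        case True
        then have qp: "(q,p) \<in> B" by (rule sym)
        then have Ein: "E q p \<in> ?A" by (rule E_in)
        have pq: "p \<in> {1..n}" "q \<in> {1..n}" using True sub by auto
        have "\<phi> b (E q p) = \<phi> b' (E q p)" using eq by simp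
        then show ?thesis using Ein by (simp add: \<phi>_def trE[OF pq])
      next
        case False then show ?thesis using b b' by (simp add: SMA_def)
      qed
    qed
  qed
  have surj: "f \<in> \<phi> ` ?A" if f: "f \<in> dual_space ?A madd msmult" for f
  proof -
    define b :: "'k mat" where "b = (\<lambda>q p. if (q,p) \<in> B then f (E p q) else 0)"
    have bin: "b \<in> ?A" by (auto simp: b_def SMA_def)
    have "\<phi> b x = f x" for x
    proof (cases "x \<in> ?A")
      case False then show ?thesis using f by (simp add: \<phi>_def dual_space_def)
    next
      case True
      define g where "g s = msmult (x (fst s) (snd s)) (E (fst s) (snd s))" for s
      have gin: "\<forall>s\<in>B. g s \<in> ?A" by (auto simp: g_def intro!: msmult_in E_in)
      have xs: "x = (\<lambda>i j. \<Sum>s\<in>B. g s i j)"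
      proof (intro ext)
        fix i j
        have "(\<Sum>s\<in>B. g s i j) = (\<Sum>s\<in>B. if s = (i,j) then x i j else 0)"
          by (intro sum.cong refl) (auto simp: g_def msmult_def E_def)
        also have "\<dots> = x i j" using True finB by (auto simp: sum.delta' SMA_def)
        finally show "x i j = (\<Sum>s\<in>B. g s i j)" by simp
      qed
      have fg: "f (g s) = x (fst s) (snd s) * f (E (fst s) (snd s))" if "s \<in> B" for s
      proof -
        have "E (fst s) (snd s) \<in> ?A" using that by (intro E_in) simp
        then show ?thesis using f by (simp add: g_def dual_space_def)
      qed
      have "f x = (\<Sum>s\<in>B. f (g s))"
        using f_sum[OF f zero_in madd_in finB gin] xs by metis
      also have "\<dots> = (\<Sum>s\<in>B. x (fst s) (snd s) * f (E (fst s) (snd s)))"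
        using fg by (rule sum.cong[OF refl])
      also have "\<dots> = (\<Sum>s\<in>{1..n}\<times>{1..n}. x (fst s) (snd s) * b (snd s) (fst s))"
      proof (rule sum.mono_neutral_cong_left)
        show "\<forall>s\<in>{1..n}\<times>{1..n} - B. x (fst s) (snd s) * b (snd s) (fst s) = 0"
          using True by (auto simp: SMA_def)
        show "\<And>s. s \<in> B \<Longrightarrow> x (fst s) (snd s) * f (E (fst s) (snd s)) = x (fst s) (snd s) * b (snd s) (fst s)"
          using sym by (auto simp: b_def)
      qed (use sub in auto)
      also have "\<dots> = tr n x b"
        unfolding tr_def sum.cartesian_product by (simp add: case_prod_beta)
      finally show ?thesis using True by (simp add: \<phi>_def)
    qed
    then have "f = \<phi> b" by auto
    then show ?thesis using bin by blast
  qed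
  have "bij_betw \<phi> ?A (dual_space ?A madd msmult)"
    unfolding bij_betw_def using inj into surj by blast
  then show ?thesis unfolding is_frobenius_def using add smul mod by blast
qed

lemma part_sym: "B = block_union Is \<Longrightarrow> (i,j) \<in> B \<Longrightarrow> (j,i) \<in> B"
  by (auto simp: block_union_def)

lemma sym_part:
  fixes B :: "(nat \<times> nat) set" and n :: nat
  assumes sub: "B \<subseteq> {1..n} \<times> {1..n}"
    and refl: "\<forall>i\<in>{1..n}. (i, i) \<in> B"
    and trans: "\<forall>i j l. (i, j) \<in> B \<and> (j, l) \<in> B \<longrightarrow> (i, l) \<in> B"
    and sym: "\<And>i j. (i,j) \<in> B \<Longrightarrow> (j,i) \<in> B"
  shows "\<exists>Is. is_partition_list Is n \<and> B = block_union Is"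
proof -
  define R where "R = {i\<in>{1..n}. \<forall>k. (k,i) \<in> B \<longrightarrow> i \<le> k}"
  define cl where "cl i = {k. (i,k) \<in> B}" for i
  define rs where "rs = sorted_list_of_set R"
  define Is where "Is = map cl rs"
  have finR: "finite R" by (simp add: R_def)
  have setrs: "set rs = R" and drs: "distinct rs" using finR by (auto simp: rs_def)
  have Rin: "r \<in> {1..n}" if "r \<in> R" for r using that by (simp add: R_def)
  have minrep: "\<exists>r\<in>R. (r,k) \<in> B" if k: "k \<in> {1..n}" for k
  proof -
    define r where "r = Min {i. (i,k) \<in> B}"
    have fin: "finite {i. (i,k) \<in> B}" by (rule finite_subset[of _ "{1..n}"]) (use sub in auto)
    have ne: "k \<in> {i. (i,k) \<in> B}" using refl k by auto
    have rk: "(r,k) \<in> B" using Min_in[OF fin] ne r_def by blast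
    have "r \<in> R"
      unfolding R_def
    proof (intro CollectI conjI allI impI)
      show "r \<in> {1..n}" using rk sub by auto
      fix k' assume "(k', r) \<in> B"
      then have "(k',k) \<in> B" using rk trans by blast
      then show "r \<le> k'" unfolding r_def using fin by (intro Min_le) auto
    qed
    then show ?thesis using rk by blast
  qed
  have same: "r = r'" if "r \<in> R" "r' \<in> R" "(r,k) \<in> B" "(r',k) \<in> B" for r r' k
  proof -
    have "(r,r') \<in> B" using that sym trans by blast
    moreover have "(r',r) \<in> B" using that sym trans by blast
    ultimately show ?thesis using that(1,2) unfolding R_def by force
  qed
  have p1: "\<forall>j < length Is. Is ! j \<noteq> {}"
  proof (intro allI impI)
    fix j assume "j < length Is"
    then have "rs ! j \<in> R" "j < length rs" using setrs by (auto simp: Is_def)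
    then have "rs ! j \<in> Is ! j" using refl Rin by (auto simp: Is_def cl_def)
    then show "Is ! j \<noteq> {}" by auto
  qed
  have p2: "\<forall>j < length Is. \<forall>l < length Is. j \<noteq> l \<longrightarrow> Is ! j \<inter> Is ! l = {}"
  proof (intro allI impI)
    fix j l assume j: "j < length Is" and l: "l < length Is" and jl: "j \<noteq> l"
    then have jr: "rs ! j \<in> R" "rs ! l \<in> R" using setrs by (auto simp: Is_def)
    have ne: "rs ! j \<noteq> rs ! l" using drs j l jl by (simp add: Is_def nth_eq_iff_index_eq)
    show "Is ! j \<inter> Is ! l = {}"
    proof (rule ccontr)
      assume "Is ! j \<inter> Is ! l \<noteq> {}"
      then obtain k where "(rs ! j, k) \<in> B" "(rs ! l, k) \<in> B" using j l by (auto simp: Is_def cl_def)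
      then show False using same jr ne by blast
    qed
  qed
  have p3: "\<Union> (set Is) = {1..n}"
  proof
    show "\<Union> (set Is) \<subseteq> {1..n}" using sub by (auto simp: Is_def cl_def)
    show "{1..n} \<subseteq> \<Union> (set Is)"
    proof
      fix k assume "k \<in> {1..n}"
      then obtain r where "r \<in> R" "(r,k) \<in> B" using minrep by blast
      then show "k \<in> \<Union> (set Is)" using setrs by (auto simp: Is_def cl_def)
    qed
  qed
  have p4: "B = block_union Is"
  proof
    show "B \<subseteq> block_union Is"
    proof
      fix s assume s: "s \<in> B"
      obtain a b where ab: "s = (a,b)" by fastforce
      have "a \<in> {1..n}" using s ab sub by auto
      then obtain r where r: "r \<in> R" "(r,a) \<in> B" using minrep by blast
      then have "(r,b) \<in> B" using s ab trans by blast
      then show "s \<in> block_union Is" using r ab setrs by (auto simp: block_union_def Is_def cl_def)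
    qed
    show "block_union Is \<subseteq> B"
    proof
      fix s assume "s \<in> block_union Is"
      then obtain r a b where "s = (a,b)" "(r,a) \<in> B" "(r,b) \<in> B" by (auto simp: block_union_def Is_def cl_def)
      then show "s \<in> B" using sym trans by blast
    qed
  qed
  show ?thesis using p1 p2 p3 p4 unfolding is_partition_list_def by blast
qed

definition enum :: "nat set \<Rightarrow> nat \<Rightarrow> nat" where
  "enum I a = sorted_list_of_set I ! (a - 1)"

lemma enum_bij: "finite I \<Longrightarrow> bij_betw (enum I) {1..card I} I"
proof -
  assume fin: "finite I"
  have b1: "bij_betw (\<lambda>a. a - 1) {1..card I} {..<card I}"
    by (rule bij_betw_byWitness[where f' = Suc]) auto
  have b2: "bij_betw ((!) (sorted_list_of_set I)) {..<card I} I"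
    using fin by (intro bij_betw_nth) auto
  have "bij_betw ((!) (sorted_list_of_set I) \<circ> (\<lambda>a. a - 1)) {1..card I} I"
    by (rule bij_betw_trans[OF b1 b2])
  moreover have "enum I = (!) (sorted_list_of_set I) \<circ> (\<lambda>a. a - 1)"
    by (auto simp: enum_def fun_eq_iff)
  ultimately show ?thesis by simp
qed

lemma iso_part:
  fixes B :: "(nat \<times> nat) set" and n :: nat
  assumes part: "is_partition_list Is n" and BI: "B = block_union Is"
  shows "alg_iso (SMA B :: 'k::field mat set) madd msmult (mmult n) (mone n)
                    (prod_mat (map card Is)) padd psmult (pmult (map card Is)) (pone (map card Is))"
proof -
  let ?A = "SMA B :: 'k mat set"
  let ?L = "length Is"
  define c where "c j = card (Is ! j)" for j
  define en where "en j = enum (Is ! j)" for j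
  have sub: "Is ! j \<subseteq> {1..n}" if "j < ?L" for j
    using part that unfolding is_partition_list_def by (metis Union_upper nth_mem)
  have fin: "finite (Is ! j)" if "j < ?L" for j using sub[OF that] by (rule finite_subset) simp
  have bij: "bij_betw (en j) {1..c j} (Is ! j)" if "j < ?L" for j
    unfolding en_def c_def using fin[OF that] by (rule enum_bij)
  have uniq: "j = l" if "j < ?L" "l < ?L" "p \<in> Is ! j" "p \<in> Is ! l" for j l p
    using part that unfolding is_partition_list_def by blast
  have Bchar: "(p,q) \<in> B \<longleftrightarrow> (\<exists>j<?L. p \<in> Is ! j \<and> q \<in> Is ! j)" for p q
    unfolding BI block_union_def by (auto simp: in_set_conv_nth) (metis nth_mem)
  have BnotA: "(p,q) \<notin> B" if "j < ?L" "p \<in> Is ! j" "q \<notin> Is ! j" for j p q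
    using Bchar uniq that by blast
  have BnotB: "(p,q) \<notin> B" if "j < ?L" "q \<in> Is ! j" "p \<notin> Is ! j" for j p q
    using Bchar uniq that by blast
  have enin: "en j a \<in> Is ! j" if "j < ?L" "a \<in> {1..c j}" for j a
    using bij[OF that(1)] that(2) by (auto dest: bij_betwE)
  have eninj: "en j a = en j b \<longleftrightarrow> a = b" if "j < ?L" "a \<in> {1..c j}" "b \<in> {1..c j}" for j a b
    using bij[OF that(1)] that(2,3) unfolding bij_betw_def inj_on_def by blast
  define \<psi> :: "'k mat \<Rightarrow> (nat \<Rightarrow> 'k mat)" where
    "\<psi> M = (\<lambda>j. if j < ?L then (\<lambda>a b. if a \<in> {1..c j} \<and> b \<in> {1..c j} then M (en j a) (en j b) else 0) else (\<lambda>_ _. 0))" for M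
  have cj: "map card Is ! j = c j" if "j < ?L" for j using that by (simp add: c_def)
  have into: "\<psi> M \<in> prod_mat (map card Is)" for M
    by (auto simp: prod_mat_def \<psi>_def SMA_def c_def)
  have inj: "inj_on \<psi> ?A"
  proof
    fix M N assume M: "M \<in> ?A" and N: "N \<in> ?A" and eq: "\<psi> M = \<psi> N"
    show "M = N"
    proof (intro ext)
      fix p q
      show "M p q = N p q"
      proof (cases "(p,q) \<in> B")
        case True
        then obtain j where j: "j < ?L" "p \<in> Is ! j" "q \<in> Is ! j" using Bchar by blast
        obtain a where a: "a \<in> {1..c j}" "en j a = p" using bij[OF j(1)] j(2) by (metis bij_betw_iff_bijections)
        obtain b where b: "b \<in> {1..c j}" "en j b = q" using bij[OF j(1)] j(3) by (metis bij_betw_iff_bijections)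
        have "\<psi> M j a b = \<psi> N j a b" using eq by simp
        then show ?thesis using a b j by (simp add: \<psi>_def)
      next
        case False then show ?thesis using M N by (simp add: SMA_def)
      qed
    qed
  qed
  have surj: "F \<in> \<psi> ` ?A" if F: "F \<in> prod_mat (map card Is)" for F
  proof -
    define blk where "blk p = (SOME j. j < ?L \<and> p \<in> Is ! j)" for p
    define pos where "pos j p = inv_into {1..c j} (en j) p" for j p
    define M :: "'k mat" where "M p q = (if (p,q) \<in> B then F (blk p) (pos (blk p) p) (pos (blk p) q) else 0)" for p q
    have Min: "M \<in> ?A" by (auto simp: M_def SMA_def)
    have blk: "blk p = j" if "j < ?L" "p \<in> Is ! j" for j p
    proof -
      have "blk p < ?L \<and> p \<in> Is ! blk p" unfolding blk_def by (rule someI[of _ j]) (use that in simp)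
      then show ?thesis using uniq that by blast
    qed
    have pos: "pos j (en j a) = a" if "j < ?L" "a \<in> {1..c j}" for j a
      unfolding pos_def using bij[OF that(1)] that(2) by (simp add: bij_betw_def inv_into_f_f)
    have Fj: "F j \<in> full_mat (c j)" if "j < ?L" for j using F that by (simp add: prod_mat_def c_def)
    have Fz: "F j = (\<lambda>_ _. 0)" if "\<not> j < ?L" for j using F that by (simp add: prod_mat_def)
    have "\<psi> M = F"
    proof (intro ext)
      fix j a b
      show "\<psi> M j a b = F j a b"
      proof (cases "j < ?L")
        case True
        show ?thesis
        proof (cases "a \<in> {1..c j} \<and> b \<in> {1..c j}")
          case ab: True
          have "(en j a, en j b) \<in> B" using Bchar enin True ab by blast
          then show ?thesis using True ab enin by (simp add: \<psi>_def M_def blk pos)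
        next
          case False
          then show ?thesis using Fj[OF True] True by (auto simp: \<psi>_def SMA_def)
        qed
      next
        case False then show ?thesis using Fz by (simp add: \<psi>_def)
      qed
    qed
    then show ?thesis using Min by blast
  qed
  have hadd: "\<forall>x\<in>?A. \<forall>y\<in>?A. \<psi> (madd x y) = padd (\<psi> x) (\<psi> y)"
    by (auto simp: \<psi>_def padd_def madd_def fun_eq_iff)
  have hsm: "\<forall>k. \<forall>x\<in>?A. \<psi> (msmult k x) = psmult k (\<psi> x)"
    by (auto simp: \<psi>_def psmult_def msmult_def fun_eq_iff)
  have hmul: "\<forall>x\<in>?A. \<forall>y\<in>?A. \<psi> (mmult n x y) = pmult (map card Is) (\<psi> x) (\<psi> y)"
  proof (intro ballI ext)
    fix M N j a b assume M: "M \<in> ?A" and N: "N \<in> ?A"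
    show "\<psi> (mmult n M N) j a b = pmult (map card Is) (\<psi> M) (\<psi> N) j a b"
    proof (cases "j < ?L")
      case False then show ?thesis by (simp add: \<psi>_def pmult_def)
    next
      case True
      note j = True
      show ?thesis
      proof (cases "a \<in> {1..c j} \<and> b \<in> {1..c j}")
        case False
        have "(\<Sum>l\<in>{1..c j}. \<psi> M j a l * \<psi> N j l b) = 0"
          using False by (intro sum.neutral) (auto simp: \<psi>_def j)
        moreover have "\<psi> (mmult n M N) j a b = 0" using False j by (auto simp: \<psi>_def)
        moreover have "pmult (map card Is) (\<psi> M) (\<psi> N) j a b = (\<Sum>l\<in>{1..c j}. \<psi> M j a l * \<psi> N j l b)"
          using j by (simp add: pmult_def mmult_def c_def)
        ultimately show ?thesis by simp
      next
        case ab: True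
        have pa: "en j a \<in> Is ! j" and pb: "en j b \<in> Is ! j" using enin j ab by auto
        have "mmult n M N (en j a) (en j b) = (\<Sum>l\<in>Is ! j. M (en j a) l * N l (en j b))"
          unfolding mmult_def
        proof (rule sum.mono_neutral_right)
          show "\<forall>l\<in>{1..n} - Is ! j. M (en j a) l * N l (en j b) = 0"
            using BnotA[OF j pa] M by (auto simp: SMA_def)
        qed (use sub[OF j] in auto)
        also have "\<dots> = (\<Sum>l\<in>{1..c j}. M (en j a) (en j l) * N (en j l) (en j b))"
          by (rule sum.reindex_bij_betw[OF bij[OF j], symmetric])
        also have "\<dots> = (\<Sum>l\<in>{1..c j}. \<psi> M j a l * \<psi> N j l b)"
          by (intro sum.cong refl) (use ab j in \<open>auto simp: \<psi>_def\<close>)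
        finally have "mmult n M N (en j a) (en j b) = (\<Sum>l\<in>{1..c j}. \<psi> M j a l * \<psi> N j l b)" .
        moreover have "\<psi> (mmult n M N) j a b = mmult n M N (en j a) (en j b)" using ab j by (simp add: \<psi>_def)
        moreover have "pmult (map card Is) (\<psi> M) (\<psi> N) j a b = (\<Sum>l\<in>{1..c j}. \<psi> M j a l * \<psi> N j l b)"
          using j by (simp add: pmult_def mmult_def c_def)
        ultimately show ?thesis by simp
      qed
    qed
  qed
  have hone: "\<psi> (mone n) = pone (map card Is)"
  proof (intro ext)
    fix j a b
    show "\<psi> (mone n) j a b = pone (map card Is) j a b"
    proof (cases "j < ?L")
      case False then show ?thesis by (simp add: \<psi>_def pone_def)
    next
      case True
      show ?thesis
      proof (cases "a \<in> {1..c j} \<and> b \<in> {1..c j}")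
        case ab: True
        have an: "en j a \<in> {1..n}" using enin sub True ab by blast
        have e1: "\<psi> (mone n) j a b = mone n (en j a) (en j b)" using True ab by (simp add: \<psi>_def)
        have e2: "mone n (en j a) (en j b) = (if a = b then 1 else 0)"
          using an eninj[OF True] ab by (auto simp: mone_def)
        have e3: "pone (map card Is) j a b = (if a = b then 1 else 0)"
          using True ab by (auto simp: pone_def mone_def c_def)
        show ?thesis by (simp only: e1 e2 e3)
      next
        case False
        have e1: "\<psi> (mone n) j a b = 0" using True False by (auto simp: \<psi>_def)
        have e3: "pone (map card Is) j a b = 0"
          using True False by (auto simp: pone_def mone_def c_def)
        show ?thesis by (simp only: e1 e3)
      qed
    qed
  qed
  have "bij_betw \<psi> ?A (prod_mat (map card Is))"
    unfolding bij_betw_def using inj into surj by blast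
  then show ?thesis unfolding alg_iso_def using hadd hsm hmul hone by blast
qed

theorem mainTheorem2:
  fixes B :: "(nat \<times> nat) set" and n :: nat
  assumes "n > 0"
    and "B \<subseteq> {1..n} \<times> {1..n}"
    and "\<forall>i\<in>{1..n}. (i, i) \<in> B"
    and "\<forall>i j l. (i, j) \<in> B \<and> (j, l) \<in> B \<longrightarrow> (i, l) \<in> B"
  shows "(is_frobenius (SMA B :: 'k::field mat set) madd msmult (mmult n)
           \<longleftrightarrow> (\<exists>Is. is_partition_list Is n \<and> B = block_union Is))
       \<and> (\<forall>Is. is_partition_list Is n \<and> B = block_union Is \<longrightarrow>
            alg_iso (SMA B :: 'k mat set) madd msmult (mmult n) (mone n)
                    (prod_mat (map card Is)) padd psmult (pmult (map card Is)) (pone (map card Is)))"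
proof (intro conjI iffI allI impI)
  assume fr: "is_frobenius (SMA B :: 'k::field mat set) madd msmult (mmult n)"
  have sym: "(j,i) \<in> B" if "(i,j) \<in> B" for i j
    using frob_sym[OF assms(2,3,4) fr that] .
  show "\<exists>Is. is_partition_list Is n \<and> B = block_union Is"
    using sym_part[OF assms(2,3,4) sym] by blast
next
  assume "\<exists>Is. is_partition_list Is n \<and> B = block_union Is"
  then obtain Is where "B = block_union Is" by blast
  then have sym: "(j,i) \<in> B" if "(i,j) \<in> B" for i j using part_sym that by blast
  show "is_frobenius (SMA B :: 'k::field mat set) madd msmult (mmult n)"
    using sym_frob[OF assms(2,4) sym] by blast
next
  fix Is assume "is_partition_list Is n \<and> B = block_union Is"
  then show "alg_iso (SMA B :: 'k mat set) madd msmult (mmult n) (mone n)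
                    (prod_mat (map card Is)) padd psmult (pmult (map card Is)) (pone (map card Is))"
    using iso_part by blast
qed

end
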